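(* In System $\mathsf{F_\wedge}$, if $\Theta, X <: S \vdash t : T$, then $\Theta \vdash \Lambda (X<:\top).\,t[X\wedge S/X] : \forall X.\,T[X\wedge S/X]$.
   Context: System $\mathsf{F_\wedge}$: raw types $T ::= \top \mid X \mid T \to T \mid \forall X.T \mid T \wedge T$ ($\forall X.T$ means $\forall(X<:\top).T$), up to $\alpha$-conversion. Contexts: finite sequences of $X<:T$ or $x:T$ with distinct variables, each type well-formed over the preceding part. Subtyping rules: (Var) $\Theta,X<:T,\Theta'\vdash X<:T$; (Top) $T<:\top$; (Refl); (Trans); ($\to$) from $S'<:S$, $T<:T'$ infer $S\to T<:S'\to T'$; ($\forall$) from $\Theta,X<:\top\vdash S<:T$ infer $\Theta\vdash\forall X.S<:\forall X.T$; (meet) $S\wedge S'<:S$, $S\wedge S'<:S'$, from $T<:S$, $T<:S'$ infer $T<:S\wedge S'$. Raw terms $t ::= \mathsf{top} \mid x \mid \lambda(x:T).t \mid \Lambda(X<:T).t \mid t\,t \mid t\{T\}$. Typing rules: $\Theta\vdash\mathsf{top}:\top$; $\Theta,x:T,\Theta'\vdash x:T$; (sub) from $t:T$ and $T<:T'$ infer $t:T'$; from $\Theta,x:S\vdash t:T$ infer $\Theta\vdash\lambda(x:S).t:S\to T$; from $t:S\to T$ and $s:S$ infer $t\,s:T$; from $\Theta,X<:S\vdash t:T$ infer $\Theta\vdash\Lambda(X<:S).t:\forall(X<:S).T$; from $\Theta\vdash t:\forall(X<:S).T$ and $\Theta\vdash S'<:S$ infer $\Theta\vdash t\{S'\}:T[S'/X]$.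 $t[X\wedge S/X]$ substitutes $X \wedge S$ for $X$ in all type annotations of $t$. *)

theory Defs
  imports Main
begin

text \<open>Type variables and term variables are indexed separately: a type-variable
  index counts only the type-variable bindings (and type binders) between
  the occurrence and its binder; a term-variable index counts only term
  bindings. Index 0 is the most recently bound variable. Contexts are lists
  with the most recent binding at the head.\<close>

datatype ty = Top | TVar nat | Arr ty ty | All ty | Meet ty ty
  (* All T  represents  \<forall>X.T = \<forall>(X<:Top).T, X bound as index 0 in T *)

datatype tm = TTop | Var nat | Abs ty tm | TAbs ty tm | App tm tm | TApp tm ty

datatype bind = VarB ty | TVarB ty

type_synonym env = "bind list"

fun shift :: "nat \<Rightarrow> nat \<Rightarrow> ty \<Rightarrow> ty" where
  "shift d c Top = Top"
| "shift d c (TVar i) = TVar (if i < c then i else i + d)"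
| "shift d c (Arr S T) = Arr (shift d c S) (shift d c T)"
| "shift d c (All T) = All (shift d (Suc c) T)"
| "shift d c (Meet S T) = Meet (shift d c S) (shift d c T)"

text \<open>subst k U T: capture-avoiding substitution T[U/X] of U for the type variable
  with index k (the binder being removed), decrementing the indices above k.\<close>
fun subst :: "nat \<Rightarrow> ty \<Rightarrow> ty \<Rightarrow> ty" where
  "subst k U Top = Top"
| "subst k U (TVar i) = (if i < k then TVar i else if i = k then shift k 0 U else TVar (i - 1))"
| "subst k U (Arr S T) = Arr (subst k U S) (subst k U T)"
| "subst k U (All T) = All (subst (Suc k) U T)"
| "subst k U (Meet S T) = Meet (subst k U S) (subst k U T)"

text \<open>repl k U T: substitution T[U/X] of U for the type variable X with index k,
  where U lives in the same context as X (no binder is removed, indices unchanged).\<close>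
fun repl :: "nat \<Rightarrow> ty \<Rightarrow> ty \<Rightarrow> ty" where
  "repl k U Top = Top"
| "repl k U (TVar i) = (if i = k then shift k 0 U else TVar i)"
| "repl k U (Arr S T) = Arr (repl k U S) (repl k U T)"
| "repl k U (All T) = All (repl (Suc k) U T)"
| "repl k U (Meet S T) = Meet (repl k U S) (repl k U T)"

fun repl_tm :: "nat \<Rightarrow> ty \<Rightarrow> tm \<Rightarrow> tm" where
  "repl_tm k U TTop = TTop"
| "repl_tm k U (Var x) = Var x"
| "repl_tm k U (Abs T t) = Abs (repl k U T) (repl_tm k U t)"
| "repl_tm k U (TAbs T t) = TAbs (repl k U T) (repl_tm (Suc k) U t)"
| "repl_tm k U (App t s) = App (repl_tm k U t) (repl_tm k U s)"
| "repl_tm k U (TApp t T) = TApp (repl_tm k U t) (repl k U T)"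

fun ntv :: "env \<Rightarrow> nat" where
  "ntv [] = 0"
| "ntv (VarB T # \<Gamma>) = ntv \<Gamma>"
| "ntv (TVarB T # \<Gamma>) = Suc (ntv \<Gamma>)"

fun wf_ty :: "nat \<Rightarrow> ty \<Rightarrow> bool" where
  "wf_ty n Top = True"
| "wf_ty n (TVar i) = (i < n)"
| "wf_ty n (Arr S T) = (wf_ty n S \<and> wf_ty n T)"
| "wf_ty n (All T) = wf_ty (Suc n) T"
| "wf_ty n (Meet S T) = (wf_ty n S \<and> wf_ty n T)"

fun wf_env :: "env \<Rightarrow> bool" where
  "wf_env [] = True"
| "wf_env (VarB T # \<Gamma>) = (wf_ty (ntv \<Gamma>) T \<and> wf_env \<Gamma>)"
| "wf_env (TVarB T # \<Gamma>) = (wf_ty (ntv \<Gamma>) T \<and> wf_env \<Gamma>)"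

text \<open>bound of type variable i, expressed relative to the whole context\<close>
fun tlookup :: "env \<Rightarrow> nat \<Rightarrow> ty option" where
  "tlookup [] i = None"
| "tlookup (VarB T # \<Gamma>) i = tlookup \<Gamma> i"
| "tlookup (TVarB T # \<Gamma>) i =
     (if i = 0 then Some (shift 1 0 T) else map_option (shift 1 0) (tlookup \<Gamma> (i - 1)))"

text \<open>type of term variable x, expressed relative to the whole context\<close>
fun vlookup :: "env \<Rightarrow> nat \<Rightarrow> ty option" where
  "vlookup [] x = None"
| "vlookup (VarB T # \<Gamma>) x = (if x = 0 then Some T else vlookup \<Gamma> (x - 1))"
| "vlookup (TVarB T # \<Gamma>) x = map_option (shift 1 0) (vlookup \<Gamma> x)"

inductive sub :: "env \<Rightarrow> ty \<Rightarrow> ty \<Rightarrow> bool" where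
  SVar: "wf_env \<Gamma> \<Longrightarrow> tlookup \<Gamma> i = Some U \<Longrightarrow> sub \<Gamma> (TVar i) U"
| STop: "wf_env \<Gamma> \<Longrightarrow> wf_ty (ntv \<Gamma>) S \<Longrightarrow> sub \<Gamma> S Top"
| SRefl: "wf_env \<Gamma> \<Longrightarrow> wf_ty (ntv \<Gamma>) S \<Longrightarrow> sub \<Gamma> S S"
| STrans: "sub \<Gamma> S U \<Longrightarrow> sub \<Gamma> U T \<Longrightarrow> sub \<Gamma> S T"
| SArr: "sub \<Gamma> S' S \<Longrightarrow> sub \<Gamma> T T' \<Longrightarrow> sub \<Gamma> (Arr S T) (Arr S' T')"
| SAll: "sub (TVarB Top # \<Gamma>) S T \<Longrightarrow> sub \<Gamma> (All S) (All T)"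
| SMeet1: "wf_env \<Gamma> \<Longrightarrow> wf_ty (ntv \<Gamma>) S \<Longrightarrow> wf_ty (ntv \<Gamma>) S' \<Longrightarrow> sub \<Gamma> (Meet S S') S"
| SMeet2: "wf_env \<Gamma> \<Longrightarrow> wf_ty (ntv \<Gamma>) S \<Longrightarrow> wf_ty (ntv \<Gamma>) S' \<Longrightarrow> sub \<Gamma> (Meet S S') S'"
| SMeetI: "sub \<Gamma> T S \<Longrightarrow> sub \<Gamma> T S' \<Longrightarrow> sub \<Gamma> T (Meet S S')"

inductive typing :: "env \<Rightarrow> tm \<Rightarrow> ty \<Rightarrow> bool" where
  TyTop: "wf_env \<Gamma> \<Longrightarrow> typing \<Gamma> TTop Top"
| TyVar: "wf_env \<Gamma> \<Longrightarrow> vlookup \<Gamma> x = Some T \<Longrightarrow> typing \<Gamma> (Var x) T"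
| TySub: "typing \<Gamma> t T \<Longrightarrow> sub \<Gamma> T T' \<Longrightarrow> typing \<Gamma> t T'"
| TyAbs: "typing (VarB S # \<Gamma>) t T \<Longrightarrow> typing \<Gamma> (Abs S t) (Arr S T)"
| TyApp: "typing \<Gamma> t (Arr S T) \<Longrightarrow> typing \<Gamma> s S \<Longrightarrow> typing \<Gamma> (App t s) T"
| TyTAbs: "typing (TVarB Top # \<Gamma>) t T \<Longrightarrow> typing \<Gamma> (TAbs Top t) (All T)"
  (* the rule for Lambda(X<:S).t yields forall(X<:S).T, which is a type of
     F-meet only for S = Top *)
| TyTApp: "typing \<Gamma> t (All T) \<Longrightarrow> sub \<Gamma> S' Top \<Longrightarrow> typing \<Gamma> (TApp t S') (subst 0 S' T)"

end

theory Submission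
  imports Defs
begin

lemma wf_mono: "wf_ty m T \<Longrightarrow> m \<le> n \<Longrightarrow> wf_ty n T"
  by (induction T arbitrary: m n) auto

lemma wf_shift: "wf_ty n T \<Longrightarrow> wf_ty (n + d) (shift d c T)"
proof (induction T arbitrary: n c)
  case (All T)
  then show ?case using All.IH[of "Suc n" "Suc c"] by simp
qed auto

lemma shift_shift: "c' \<le> c \<Longrightarrow> c \<le> c' + k \<Longrightarrow> shift d c (shift k c' U) = shift (d + k) c' U"
  by (induction U arbitrary: c c') auto

lemma repl_shift_no: "c \<le> k \<Longrightarrow> k < c + d \<Longrightarrow> repl k U (shift d c T) = shift d c T"
  by (induction T arbitrary: c k) auto

lemma shift_repl: "c \<le> k \<Longrightarrow> shift d c (repl k U T) = repl (k + d) U (shift d c T)"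
  by (induction T arbitrary: c k) (auto simp: shift_shift add.commute)

lemma subst_shift_no: "c \<le> j \<Longrightarrow> j \<le> c + d \<Longrightarrow> subst j S (shift (Suc d) c T) = shift d c T"
  by (induction T arbitrary: c j) auto

lemma repl_subst: "repl (k + j) U (subst j S' T) = subst j (repl k U S') (repl (Suc (k + j)) U T)"
proof (induction T arbitrary: j)
  case (TVar i)
  show ?case
  proof (cases "i < j")
    case True then show ?thesis by auto
  next
    case False
    show ?thesis
    proof (cases "i = j")
      case True then show ?thesis using shift_repl[of 0 k j U S'] by simp
    next
      case ne: False
      show ?thesis
      proof (cases "i = Suc (k + j)")
        case True then show ?thesis using False ne subst_shift_no[of 0 j "k+j" "repl k U S'" U] by simp
      next
        case False2: False then show ?thesis using False ne by auto
      qed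
    qed
  qed
next
  case (All T)
  then show ?case using All[of "Suc j"] by simp
qed auto

lemma wf_repl: "wf_ty m U \<Longrightarrow> wf_ty n T \<Longrightarrow> k + m \<le> n \<Longrightarrow> wf_ty n (repl k U T)"
proof (induction T arbitrary: k n)
  case (TVar i)
  then show ?case using wf_shift[of m U k 0] wf_mono[of "m+k" "shift k 0 U" n] by (auto simp: add.commute)
qed auto

fun menv :: "ty \<Rightarrow> env \<Rightarrow> env" where
  "menv U [] = []"
| "menv U (VarB T # G) = VarB (repl (ntv G) U T) # menv U G"
| "menv U (TVarB T # G) = TVarB (repl (ntv G) U T) # menv U G"

lemma ntv_menv[simp]: "ntv (menv U G) = ntv G"
  by (induction G rule: menv.induct) auto

lemma ntv_append[simp]: "ntv (G @ D) = ntv G + ntv D"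
  by (induction G rule: ntv.induct) auto

lemma wf_env_tail: "wf_env (G @ D) \<Longrightarrow> wf_env D"
  by (induction G rule: ntv.induct) auto

lemma wf_env_menv:
  assumes "wf_env (G @ TVarB S # \<Theta>)" "U = Meet (TVar 0) (shift 1 0 S)"
  shows "wf_env (menv U G @ TVarB Top # \<Theta>)"
  using assms
proof (induction G rule: ntv.induct)
  case 1 then show ?case by simp
next
  case (2 T G)
  have "wf_env (TVarB S # \<Theta>)" using 2(2) wf_env_tail[of "VarB T # G" "TVarB S # \<Theta>"] by simp
  then have "wf_ty (Suc (ntv \<Theta>)) U" using 2(3) wf_shift[of "ntv \<Theta>" S 1 0] by auto
  then show ?case using 2 wf_repl[of "Suc (ntv \<Theta>)" U] by auto
next
  case (3 T G)
  have "wf_env (TVarB S # \<Theta>)" using 3(2) wf_env_tail[of "TVarB T # G" "TVarB S # \<Theta>"] by simp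
  then have "wf_ty (Suc (ntv \<Theta>)) U" using 3(3) wf_shift[of "ntv \<Theta>" S 1 0] by auto
  then show ?case using 3 wf_repl[of "Suc (ntv \<Theta>)" U] by auto
qed

lemma tlookup_k: "tlookup (G @ TVarB S # \<Theta>) (ntv G) = Some (shift (Suc (ntv G)) 0 S)"
  by (induction G rule: ntv.induct) (auto simp: shift_shift)

lemma tlookup_menv:
  "tlookup (G @ TVarB S # \<Theta>) i = Some B \<Longrightarrow> i \<noteq> ntv G \<Longrightarrow>
   tlookup (menv U G @ TVarB Top # \<Theta>) i = Some (repl (ntv G) U B)"
proof (induction G arbitrary: i B rule: ntv.induct)
  case 1 then show ?case by (auto simp: repl_shift_no)
next
  case (2 T G) then show ?case by auto
next
  case (3 T G)
  show ?case
  proof (cases "i = 0")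
    case True then show ?thesis using 3 shift_repl[of 0 "ntv G" 1 U T] by auto
  next
    case False
    then obtain B' where "tlookup (G @ TVarB S # \<Theta>) (i - 1) = Some B'" "B = shift 1 0 B'"
      using 3(2) by auto
    then show ?thesis using 3 False shift_repl[of 0 "ntv G" 1 U B'] by auto
  qed
qed

lemma vlookup_menv:
  "vlookup (G @ TVarB S # \<Theta>) x = Some B \<Longrightarrow>
   vlookup (menv U G @ TVarB Top # \<Theta>) x = Some (repl (ntv G) U B)"
proof (induction G arbitrary: x B rule: ntv.induct)
  case 1 then show ?case by (auto simp: repl_shift_no)
next
  case (2 T G) then show ?case by auto
next
  case (3 T G)
  then obtain B' where "vlookup (G @ TVarB S # \<Theta>) x = Some B'" "B = shift 1 0 B'" by auto
  then show ?case using 3 shift_repl[of 0 "ntv G" 1 U B'] by auto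
qed

lemma sub_wf_env: "sub \<Gamma> A B \<Longrightarrow> wf_env \<Gamma>"
  by (induction rule: sub.induct) auto

lemma typing_wf_env: "typing \<Gamma> t T \<Longrightarrow> wf_env \<Gamma>"
  by (induction rule: typing.induct) (auto dest: sub_wf_env)

lemma sub_repl:
  assumes "sub \<Gamma> A B" "\<Gamma> = G @ TVarB S # \<Theta>" "U = Meet (TVar 0) (shift 1 0 S)"
  shows "sub (menv U G @ TVarB Top # \<Theta>) (repl (ntv G) U A) (repl (ntv G) U B)"
  using assms
proof (induction arbitrary: G rule: sub.induct)
  case (SVar \<Gamma> i B)
  have we: "wf_env (menv U G @ TVarB Top # \<Theta>)" using SVar(1,3,4) wf_env_menv by blast
  show ?case
  proof (cases "i = ntv G")
    case False
    then show ?thesis using tlookup_menv[of G S \<Theta> i B U] SVar(2,3) sub.SVar[OF we] by simp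
  next
    case True
    have B: "B = shift (Suc (ntv G)) 0 S" using SVar tlookup_k True by simp
    have wS: "wf_ty (ntv \<Theta>) S" using SVar(1) SVar(3) wf_env_tail[of G "TVarB S # \<Theta>"] by auto
    have rB: "repl (ntv G) U B = shift (Suc (ntv G)) 0 S" using B repl_shift_no by simp
    have sU: "shift (ntv G) 0 U = Meet (TVar (ntv G)) (shift (Suc (ntv G)) 0 S)"
      using SVar(4) shift_shift[of 0 0 1 "ntv G" S] by simp
    have w2: "wf_ty (ntv (menv U G @ TVarB Top # \<Theta>)) (shift (Suc (ntv G)) 0 S)"
      using wf_shift[OF wS, of "Suc (ntv G)" 0] by (simp add: add.commute)
    show ?thesis using True rB sU sub.SMeet2[OF we _ w2, of "TVar (ntv G)"] by simp
  qed
next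
  case (STop \<Gamma> S0)
  have wU: "wf_ty (Suc (ntv \<Theta>)) U"
    using STop(1,3,4) wf_env_tail[of G "TVarB S # \<Theta>"] wf_shift[of "ntv \<Theta>" S 1 0] by auto
  have we: "wf_env (menv U G @ TVarB Top # \<Theta>)" using wf_env_menv STop(1,3,4) by blast
  have w: "wf_ty (ntv (menv U G @ TVarB Top # \<Theta>)) (repl (ntv G) U S0)"
    using wf_repl[OF wU, of "ntv \<Gamma>" S0 "ntv G"] STop(2,3) by simp
  show ?case using sub.STop[OF we w] by simp
next
  case (SRefl \<Gamma> S0)
  have wU: "wf_ty (Suc (ntv \<Theta>)) U"
    using SRefl(1,3,4) wf_env_tail[of G "TVarB S # \<Theta>"] wf_shift[of "ntv \<Theta>" S 1 0] by auto
  have we: "wf_env (menv U G @ TVarB Top # \<Theta>)" using wf_env_menv SRefl(1,3,4) by blast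
  have w: "wf_ty (ntv (menv U G @ TVarB Top # \<Theta>)) (repl (ntv G) U S0)"
    using wf_repl[OF wU, of "ntv \<Gamma>" S0 "ntv G"] SRefl(2,3) by simp
  show ?case using sub.SRefl[OF we w] by simp
next
  case (STrans \<Gamma> S0 U0 T) then show ?case using STrans.IH[of G] sub.STrans by blast
next
  case (SArr \<Gamma> S' S0 T T') then show ?case using SArr.IH[of G] sub.SArr by simp
next
  case (SAll \<Gamma> S0 T)
  then show ?case using SAll.IH[of "TVarB Top # G"] by (simp add: sub.SAll)
next
  case (SMeet1 \<Gamma> S1 S2)
  have wU: "wf_ty (Suc (ntv \<Theta>)) U"
    using SMeet1(1,4,5) wf_env_tail[of G "TVarB S # \<Theta>"] wf_shift[of "ntv \<Theta>" S 1 0] by auto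
  have we: "wf_env (menv U G @ TVarB Top # \<Theta>)" using wf_env_menv SMeet1(1,4,5) by blast
  have w1: "wf_ty (ntv (menv U G @ TVarB Top # \<Theta>)) (repl (ntv G) U S1)"
    using wf_repl[OF wU, of "ntv \<Gamma>" S1 "ntv G"] SMeet1(2,4) by simp
  have w2: "wf_ty (ntv (menv U G @ TVarB Top # \<Theta>)) (repl (ntv G) U S2)"
    using wf_repl[OF wU, of "ntv \<Gamma>" S2 "ntv G"] SMeet1(3,4) by simp
  show ?case using sub.SMeet1[OF we w1 w2] by simp
next
  case (SMeet2 \<Gamma> S1 S2)
  have wU: "wf_ty (Suc (ntv \<Theta>)) U"
    using SMeet2(1,4,5) wf_env_tail[of G "TVarB S # \<Theta>"] wf_shift[of "ntv \<Theta>" S 1 0] by auto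
  have we: "wf_env (menv U G @ TVarB Top # \<Theta>)" using wf_env_menv SMeet2(1,4,5) by blast
  have w1: "wf_ty (ntv (menv U G @ TVarB Top # \<Theta>)) (repl (ntv G) U S1)"
    using wf_repl[OF wU, of "ntv \<Gamma>" S1 "ntv G"] SMeet2(2,4) by simp
  have w2: "wf_ty (ntv (menv U G @ TVarB Top # \<Theta>)) (repl (ntv G) U S2)"
    using wf_repl[OF wU, of "ntv \<Gamma>" S2 "ntv G"] SMeet2(3,4) by simp
  show ?case using sub.SMeet2[OF we w1 w2] by simp
next
  case (SMeetI \<Gamma> T S1 S2) then show ?case using SMeetI.IH[of G] sub.SMeetI by simp
qed

lemma typing_repl:
  assumes "typing \<Gamma> t T" "\<Gamma> = G @ TVarB S # \<Theta>" "U = Meet (TVar 0) (shift 1 0 S)"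
  shows "typing (menv U G @ TVarB Top # \<Theta>) (repl_tm (ntv G) U t) (repl (ntv G) U T)"
  using assms
proof (induction arbitrary: G rule: typing.induct)
  case (TyTop \<Gamma>) then show ?case using wf_env_menv[of G S \<Theta> U] typing.TyTop by simp
next
  case (TyVar \<Gamma> x T) then show ?case using wf_env_menv[of G S \<Theta> U] vlookup_menv[of G S \<Theta> x T U] typing.TyVar by simp
next
  case (TySub \<Gamma> t T T') then show ?case using TySub.IH[of G] sub_repl[OF TySub(2,4,5)] typing.TySub by blast
next
  case (TyAbs S0 \<Gamma> t T)
  then show ?case using TyAbs.IH[of "VarB S0 # G"] by (simp add: typing.TyAbs)
next
  case (TyApp \<Gamma> t S0 T s) then show ?case using TyApp.IH[of G] typing.TyApp by simp
next
  case (TyTAbs \<Gamma> t T)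
  then show ?case using TyTAbs.IH[of "TVarB Top # G"] by (simp add: typing.TyTAbs)
next
  case (TyTApp \<Gamma> t T S')
  have 1: "typing (menv U G @ TVarB Top # \<Theta>) (repl_tm (ntv G) U t) (All (repl (Suc (ntv G)) U T))"
    using TyTApp by simp
  have 2: "sub (menv U G @ TVarB Top # \<Theta>) (repl (ntv G) U S') Top"
    using sub_repl[OF TyTApp(2) TyTApp(4,5)] by simp
  show ?case using typing.TyTApp[OF 1 2] repl_subst[of "ntv G" 0 U S' T] by simp
qed

theorem proposition5p4:
  assumes "typing (TVarB S # \<Theta>) t T"
  shows "typing \<Theta> (TAbs Top (repl_tm 0 (Meet (TVar 0) (shift 1 0 S)) t))
                    (All (repl 0 (Meet (TVar 0) (shift 1 0 S)) T))"
  using typing_repl[OF assms, of "[]"] typing.TyTAbs by simp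

end
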